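(* Let $E=(E_C,\gamma_{C'C},\delta_{CC'})$ be an object of the category $\mathcal{A}$ (defined in the context), and let $O$ denote the unique minimal face of $\mathcal{C}$ (the face $\{0\}$). Then the vector space $E_O$ becomes a left $R$-module if each generator $e_C$ ($C\in\mathcal{C}$) is made to act by $e_C(v)=\delta_{CO}\gamma_{OC}(v)$.
   Context: Let $\mathcal{H}$ be a finite arrangement of linear hyperplanes in $\mathbb{R}^n$; for each $H\in\mathcal{H}$ fix a real linear form $f_H$ with $H=\ker f_H$. For $x\in\mathbb{R}^n$ its sign vector $\sigma(x)\in\{+,-,0\}^{\mathcal{H}}$ records the sign of $f_H(x)$ for each $H$. The faces of $\mathcal{H}$ are the classes of points with equal sign vectors; $\mathcal{C}$ is the set of faces, partially ordered by $C'\le C$ iff $C'\subseteq\overline{C}$. Chambers are faces of dimension $n$. Two faces $A,B$ of the same dimension $d\ge 1$ oppose each other if they have the same real linear span and there is a face $C$ of dimension $d-1$ with $C\le A$, $C\le B$ and $\sigma(A)_H=-\sigma(B)_H$ for every $H$ with $\sigma(C)_H=0$. Faces $A,B,C$ are collinear if some straight line segment in $\mathbb{R}^n$ meets $A$, $B$, $C$ in that order. The algebra $R$: let $R_0$ be the $\mathbb{C}$-algebra generated by symbols $e_C$, $C\in\mathcal{C}$, subject to (R1) $e_C^2=e_C$; (R2) $e_Ae_C=e_Ae_Be_C$ whenever $A,B,C$ are collinear; (R3) $e_Ae_B=e_B=e_Be_A$ whenever $A\le B$. Then $R$ is the noncommutative localisation of $R_0$ obtained by inverting all elements $e_Ae_Be_A+(1-e_A)$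 with $A,B$ opposing faces. A double representation $E$ of $\mathcal{C}$ consists of vector spaces $E_C$ ($C\in\mathcal{C}$) and linear maps $\gamma_{C'C}:E_{C'}\to E_C$, $\delta_{CC'}:E_C\to E_{C'}$ for each $C'\le C$, with $\gamma_{CC}=\delta_{CC}=\mathrm{id}$, $\gamma_{C_2C_3}\gamma_{C_1C_2}=\gamma_{C_1C_3}$ and $\delta_{C_2C_1}\delta_{C_3C_2}=\delta_{C_3C_1}$ for $C_1\le C_2\le C_3$. The category $\mathcal{A}$ is the full subcategory of finite-dimensional double representations satisfying: (monotonicity) $\gamma_{C'C}\delta_{CC'}=\mathrm{id}_{E_C}$ for all $C'\le C$, so that $\varphi_{AB}:=\gamma_{CB}\delta_{AC}:E_A\to E_B$ is independent of the choice of $C$ with $C\le A$, $C\le B$; (transitivity) $\varphi_{AC}=\varphi_{BC}\varphi_{AB}$ whenever $A,B,C$ are collinear; (invertibility) $\varphi_{AB}$ is an isomorphism whenever $A,B$ oppose each other. *)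

theory Defs
  imports "HOL-Analysis.Analysis"
begin

definition lin_arrangement :: "'a::euclidean_space set set \<Rightarrow> ('a set \<Rightarrow> 'a \<Rightarrow> real) \<Rightarrow> bool" where
  "lin_arrangement H f \<longleftrightarrow> finite H \<and>
     (\<forall>Hy\<in>H. linear (f Hy) \<and> (\<exists>x. f Hy x \<noteq> 0) \<and> Hy = {x. f Hy x = 0})"

definition sign_vec :: "'a::euclidean_space set set \<Rightarrow> ('a set \<Rightarrow> 'a \<Rightarrow> real) \<Rightarrow> 'a \<Rightarrow> 'a set \<Rightarrow> real" where
  "sign_vec H f x = (\<lambda>Hy. if Hy \<in> H then sgn (f Hy x) else 0)"

definition faces :: "'a::euclidean_space set set \<Rightarrow> ('a set \<Rightarrow> 'a \<Rightarrow> real) \<Rightarrow> 'a set set" where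
  "faces H f = {{y. sign_vec H f y = sign_vec H f x} | x. True}"

definition face_le :: "'a::euclidean_space set \<Rightarrow> 'a set \<Rightarrow> bool" where
  "face_le C' C \<longleftrightarrow> C' \<subseteq> closure C"

text \<open>Sign vector of a face (common sign vector of its points).\<close>
definition face_sign :: "'a::euclidean_space set set \<Rightarrow> ('a set \<Rightarrow> 'a \<Rightarrow> real) \<Rightarrow> 'a set \<Rightarrow> 'a set \<Rightarrow> real" where
  "face_sign H f C = sign_vec H f (SOME x. x \<in> C)"

text \<open>The unique minimal face: the face containing the origin.\<close>
definition zero_face :: "'a::euclidean_space set set \<Rightarrow> ('a set \<Rightarrow> 'a \<Rightarrow> real) \<Rightarrow> 'a set" where
  "zero_face H f = {y. sign_vec H f y = sign_vec H f 0}"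

definition opposing :: "'a::euclidean_space set set \<Rightarrow> ('a set \<Rightarrow> 'a \<Rightarrow> real) \<Rightarrow> 'a set \<Rightarrow> 'a set \<Rightarrow> bool" where
  "opposing H f A B \<longleftrightarrow> A \<in> faces H f \<and> B \<in> faces H f \<and>
     dim A = dim B \<and> dim A \<ge> 1 \<and> span A = span B \<and>
     (\<exists>C\<in>faces H f. dim C + 1 = dim A \<and> face_le C A \<and> face_le C B \<and>
        (\<forall>Hy\<in>H. face_sign H f C Hy = 0 \<longrightarrow> face_sign H f A Hy = - face_sign H f B Hy))"

definition faces_collinear :: "'a::real_vector set \<Rightarrow> 'a set \<Rightarrow> 'a set \<Rightarrow> bool" where
  "faces_collinear A B C \<longleftrightarrow> (\<exists>x\<in>A. \<exists>y\<in>B. \<exists>z\<in>C. y \<in> closed_segment x z)"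

text \<open>Finite-dimensional complex vector spaces are realised as C-linear subspaces of
  an ambient C^m ('m an arbitrary finite index type); every finite family of
  finite-dimensional spaces embeds this way.\<close>

definition csubspace :: "(complex^'m) set \<Rightarrow> bool" where
  "csubspace V \<longleftrightarrow> 0 \<in> V \<and> (\<forall>x\<in>V. \<forall>y\<in>V. x + y \<in> V) \<and> (\<forall>c. \<forall>x\<in>V. c *s x \<in> V)"

text \<open>C-linear map from V to W (only its values on V matter).\<close>
definition clin_map :: "(complex^'m) set \<Rightarrow> (complex^'m) set \<Rightarrow> (complex^'m \<Rightarrow> complex^'m) \<Rightarrow> bool" where
  "clin_map V W g \<longleftrightarrow> (\<forall>x\<in>V. g x \<in> W) \<and> (\<forall>x\<in>V. \<forall>y\<in>V. g (x + y) = g x + g y) \<and>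
     (\<forall>c. \<forall>x\<in>V. g (c *s x) = c *s g x)"

text \<open>E C is the space at the face C; gam C' C : E C' \<rightarrow> E C and del C C' : E C \<rightarrow> E C'
  for C' \<le> C.\<close>
definition double_rep ::
  "'a::euclidean_space set set \<Rightarrow> ('a set \<Rightarrow> 'a \<Rightarrow> real) \<Rightarrow> ('a set \<Rightarrow> (complex^'m) set)
   \<Rightarrow> ('a set \<Rightarrow> 'a set \<Rightarrow> complex^'m \<Rightarrow> complex^'m) \<Rightarrow> ('a set \<Rightarrow> 'a set \<Rightarrow> complex^'m \<Rightarrow> complex^'m) \<Rightarrow> bool" where
  "double_rep H f E gam del \<longleftrightarrow>
     (\<forall>C\<in>faces H f. csubspace (E C)) \<and>
     (\<forall>C'\<in>faces H f. \<forall>C\<in>faces H f. face_le C' C \<longrightarrow>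
         clin_map (E C') (E C) (gam C' C) \<and> clin_map (E C) (E C') (del C C')) \<and>
     (\<forall>C\<in>faces H f. \<forall>v\<in>E C. gam C C v = v \<and> del C C v = v) \<and>
     (\<forall>C1\<in>faces H f. \<forall>C2\<in>faces H f. \<forall>C3\<in>faces H f.
         face_le C1 C2 \<and> face_le C2 C3 \<longrightarrow>
           (\<forall>v\<in>E C1. gam C2 C3 (gam C1 C2 v) = gam C1 C3 v) \<and>
           (\<forall>v\<in>E C3. del C2 C1 (del C3 C2 v) = del C3 C1 v))"

text \<open>phi A B = gam C B \<circ> del A C for some face C \<le> A, C \<le> B (independent of the
  choice under monotonicity).\<close>
definition phi ::
  "'a::euclidean_space set set \<Rightarrow> ('a set \<Rightarrow> 'a \<Rightarrow> real)
   \<Rightarrow> ('a set \<Rightarrow> 'a set \<Rightarrow> complex^'m \<Rightarrow> complex^'m) \<Rightarrow> ('a set \<Rightarrow> 'a set \<Rightarrow> complex^'m \<Rightarrow> complex^'m) \<Rightarrow> 'a set \<Rightarrow> 'a set \<Rightarrow> complex^'m \<Rightarrow> complex^'m" where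
  "phi H f gam del A B =
     (let C = (SOME C. C \<in> faces H f \<and> face_le C A \<and> face_le C B) in (\<lambda>v. gam C B (del A C v)))"

definition in_cat_A ::
  "'a::euclidean_space set set \<Rightarrow> ('a set \<Rightarrow> 'a \<Rightarrow> real) \<Rightarrow> ('a set \<Rightarrow> (complex^'m) set)
   \<Rightarrow> ('a set \<Rightarrow> 'a set \<Rightarrow> complex^'m \<Rightarrow> complex^'m) \<Rightarrow> ('a set \<Rightarrow> 'a set \<Rightarrow> complex^'m \<Rightarrow> complex^'m) \<Rightarrow> bool" where
  "in_cat_A H f E gam del \<longleftrightarrow>
     double_rep H f E gam del \<and>
     \<comment> \<open>monotonicity\<close>
     (\<forall>C'\<in>faces H f. \<forall>C\<in>faces H f. face_le C' C \<longrightarrow> (\<forall>v\<in>E C. gam C' C (del C C' v) = v)) \<and>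
     \<comment> \<open>transitivity\<close>
     (\<forall>A\<in>faces H f. \<forall>B\<in>faces H f. \<forall>C\<in>faces H f. faces_collinear A B C \<longrightarrow>
        (\<forall>v\<in>E A. phi H f gam del A C v = phi H f gam del B C (phi H f gam del A B v))) \<and>
     \<comment> \<open>invertibility\<close>
     (\<forall>A B. opposing H f A B \<longrightarrow> bij_betw (phi H f gam del A B) (E A) (E B))"

text \<open>R is the localisation of R0 (generated by e_C subject to R1-R3) at the elements
  e_A e_B e_A + (1 - e_A), A, B opposing. By the universal properties of presented
  algebras and of localisation, a left R-module structure on a complex vector space V
  in which e_C acts by act C is the same as a family of C-linear endomorphisms act C
  of V satisfying R1-R3 such that every act A \<circ> act B \<circ> act A + (id - act A) with
  A, B opposing is invertible.\<close>
definition R_module_action ::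
  "'a::euclidean_space set set \<Rightarrow> ('a set \<Rightarrow> 'a \<Rightarrow> real) \<Rightarrow> (complex^'m) set
   \<Rightarrow> ('a set \<Rightarrow> complex^'m \<Rightarrow> complex^'m) \<Rightarrow> bool" where
  "R_module_action H f V act \<longleftrightarrow>
     csubspace V \<and>
     (\<forall>C\<in>faces H f. clin_map V V (act C)) \<and>
     \<comment> \<open>(R1)\<close>
     (\<forall>C\<in>faces H f. \<forall>v\<in>V. act C (act C v) = act C v) \<and>
     \<comment> \<open>(R2)\<close>
     (\<forall>A\<in>faces H f. \<forall>B\<in>faces H f. \<forall>C\<in>faces H f. faces_collinear A B C \<longrightarrow>
        (\<forall>v\<in>V. act A (act C v) = act A (act B (act C v)))) \<and>
     \<comment> \<open>(R3)\<close>
     (\<forall>A\<in>faces H f. \<forall>B\<in>faces H f. face_le A B \<longrightarrow>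
        (\<forall>v\<in>V. act A (act B v) = act B v \<and> act B (act A v) = act B v)) \<and>
     \<comment> \<open>localisation: inverted elements act invertibly\<close>
     (\<forall>A B. opposing H f A B \<longrightarrow>
        bij_betw (\<lambda>v. act A (act B (act A v)) + (v - act A v)) V V)"

end

theory Submission
  imports Defs
begin

lemma zero_face_in: "zero_face H f \<in> faces H f"
  unfolding zero_face_def faces_def by blast

lemma zero_face_le:
  assumes la: "lin_arrangement H f" and C: "C \<in> faces H f"
  shows "face_le (zero_face H f) C"
proof -
  obtain x where Cx: "C = {y. sign_vec H f y = sign_vec H f x}" using C unfolding faces_def by blast
  have lin: "\<And>Hy. Hy \<in> H \<Longrightarrow> linear (f Hy)" using la unfolding lin_arrangement_def by blast
  show ?thesis unfolding face_le_def
  proof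
    fix y assume y: "y \<in> zero_face H f"
    have fy: "f Hy y = 0" if "Hy \<in> H" for Hy
    proof -
      have "sgn (f Hy y) = sgn (f Hy 0)" using y that unfolding zero_face_def sign_vec_def by (auto dest: fun_cong[where x=Hy])
      moreover have "f Hy 0 = 0" using lin[OF that] linear_0 by blast
      ultimately show ?thesis by (simp add: sgn_0_0)
    qed
    have mem: "y + t *\<^sub>R x \<in> C" if "t > 0" for t
    proof -
      have "sign_vec H f (y + t *\<^sub>R x) = sign_vec H f x"
      proof
        fix Hy show "sign_vec H f (y + t *\<^sub>R x) Hy = sign_vec H f x Hy"
        proof (cases "Hy \<in> H")
          case True
          have "f Hy (y + t *\<^sub>R x) = t * f Hy x"
            using lin[OF True] fy[OF True] by (simp add: linear_add linear_scale)
          then show ?thesis using True that unfolding sign_vec_def by (simp add: sgn_mult)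
        qed (simp add: sign_vec_def)
      qed
      then show ?thesis using Cx by blast
    qed
    show "y \<in> closure C"
      unfolding closure_approachable
    proof (intro allI impI)
      fix e :: real assume e: "e > 0"
      define t where "t = e / (2 * (norm x + 1))"
      have t: "t > 0" using e unfolding t_def by (intro divide_pos_pos) (auto intro: add_nonneg_pos)
      have "dist (y + t *\<^sub>R x) y = t * norm x" using t by (simp add: dist_norm)
      also have "\<dots> < e" using e
      proof -
        have d: "2 * (norm x + 1) > 0" by (simp add: add_nonneg_pos)
        have "norm x / (2 * (norm x + 1)) < 1" using d by (simp add: divide_less_eq)
        then have "e * (norm x / (2 * (norm x + 1))) < e * 1" using e by (intro mult_strict_left_mono)
        then show ?thesis by (simp add: t_def algebra_simps)
      qed
      finally show "\<exists>z\<in>C. dist z y < e" using mem[OF t] by blast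
    qed
  qed
qed

lemma csub_diff: assumes "csubspace V" "x \<in> V" "y \<in> V" shows "x - y \<in> V"
proof -
  have "(-1::complex) *s y \<in> V" using assms unfolding csubspace_def by blast
  then have "x + (-1::complex) *s y \<in> V" using assms unfolding csubspace_def by blast
  moreover have "x + (-1::complex) *s y = x - y" by (simp add: vec_eq_iff)
  ultimately show ?thesis by simp
qed
lemma clin_diff: assumes "csubspace V" "clin_map V W g" "x \<in> V" "y \<in> V" shows "g (x - y) = g x - g y"
proof -
  have "x - y \<in> V" using csub_diff assms by blast
  then have "g (x - y + y) = g (x - y) + g y" using assms unfolding clin_map_def by blast
  then show ?thesis by simp
qed

lemma clin_comp: "clin_map U V g \<Longrightarrow> clin_map V W h \<Longrightarrow> clin_map U W (\<lambda>x. h (g x))"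
  unfolding clin_map_def by auto

lemma abstract_bij:
  assumes V: "csubspace V" and W: "csubspace W"
    and g: "clin_map V W g" and d: "clin_map W V d"
    and gd: "\<forall>w\<in>W. g (d w) = w" and T: "bij_betw T W W"
    and M: "\<forall>v\<in>V. M v = d (T (g v)) + (v - d (g v))"
  shows "bij_betw M V V"
proof -
  have gV: "g v \<in> W" if "v \<in> V" for v using g that unfolding clin_map_def by blast
  have dW: "d w \<in> V" if "w \<in> W" for w using d that unfolding clin_map_def by blast
  have TW: "T w \<in> W" if "w \<in> W" for w using T that by (meson bij_betw_apply)
  have gadd: "g (x + y) = g x + g y" if "x \<in> V" "y \<in> V" for x y using g that unfolding clin_map_def by blast
  have gM: "g (M v) = T (g v)" if v: "v \<in> V" for v
  proof -
    have "g (M v) = g (d (T (g v))) + (g v - g (d (g v)))"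
      using M v gadd clin_diff[OF V g] dW TW gV csub_diff[OF V] by simp
    then show ?thesis using gd TW gV v by simp
  qed
  have MV: "M v \<in> V" if "v \<in> V" for v
  proof -
    have "d (T (g v)) + (v - d (g v)) \<in> V" using V that dW TW gV csub_diff[OF V]
      unfolding csubspace_def by blast
    then show ?thesis using M that by simp
  qed
  have inj: "inj_on M V"
  proof (rule inj_onI)
    fix x y assume x: "x \<in> V" and y: "y \<in> V" and e: "M x = M y"
    have "T (g x) = T (g y)" using gM[OF x] gM[OF y] e by simp
    then have "g x = g y" using T gV x y unfolding bij_betw_def inj_on_def by blast
    then show "x = y" using e M x y by simp
  qed
  have surj: "V \<subseteq> M ` V"
  proof
    fix w assume w: "w \<in> V"
    obtain u where u: "u \<in> W" "T u = g w" using T gV[OF w] unfolding bij_betw_def by (metis imageE)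
    define v where "v = d u + (w - d (g w))"
    have dgw: "d (g w) \<in> V" using dW gV w by blast
    have wd: "w - d (g w) \<in> V" using csub_diff[OF V w dgw] .
    have vV: "v \<in> V" unfolding v_def using V dW[OF u(1)] wd unfolding csubspace_def by blast
    have "g v = g (d u) + (g w - g (d (g w)))"
      unfolding v_def using gadd[OF dW[OF u(1)] wd] clin_diff[OF V g w dgw] by simp
    then have gv: "g v = u" using gd u gV w by simp
    have "M v = d (g w) + v - d u" using M vV gv u by simp
    also have "\<dots> = w" unfolding v_def by simp
    finally show "w \<in> M ` V" using vV by (metis image_eqI)
  qed
  show ?thesis unfolding bij_betw_def using inj surj MV by blast
qed

lemma opposing_sym: "opposing H f A B \<Longrightarrow> opposing H f B A"
  unfolding opposing_def by (metis minus_minus)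

theorem proposition2p6:
  fixes H :: "'a::euclidean_space set set"
    and f :: "'a set \<Rightarrow> 'a \<Rightarrow> real"
    and E :: "'a set \<Rightarrow> (complex^'m) set"
    and gam del :: "'a set \<Rightarrow> 'a set \<Rightarrow> complex^'m \<Rightarrow> complex^'m"
  assumes "lin_arrangement H f"
    and "in_cat_A H f E gam del"
  shows "R_module_action H f (E (zero_face H f))
           (\<lambda>C v. del C (zero_face H f) (gam (zero_face H f) C v))"
proof -
  define Z where "Z = zero_face H f"
  define F where "F = faces H f"
  have ZF: "Z \<in> F" unfolding Z_def F_def by (rule zero_face_in)
  have Ole: "face_le Z C" if "C \<in> F" for C using zero_face_le[OF assms(1)] that unfolding Z_def F_def by blast
  have dr: "double_rep H f E gam del" using assms(2) unfolding in_cat_A_def by blast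
  have sub: "csubspace (E C)" if "C \<in> F" for C using dr that unfolding double_rep_def F_def by blast
  have cmg: "clin_map (E C') (E C) (gam C' C)" if "C' \<in> F" "C \<in> F" "face_le C' C" for C' C
    using dr that unfolding double_rep_def F_def by blast
  have cmd: "clin_map (E C) (E C') (del C C')" if "C' \<in> F" "C \<in> F" "face_le C' C" for C' C
    using dr that unfolding double_rep_def F_def by blast
  have compg: "gam B C (gam A B v) = gam A C v"
    if "A \<in> F" "B \<in> F" "C \<in> F" "face_le A B" "face_le B C" "v \<in> E A" for A B C v
    using dr that unfolding double_rep_def F_def by blast
  have compd: "del B A (del C B v) = del C A v"
    if "A \<in> F" "B \<in> F" "C \<in> F" "face_le A B" "face_le B C" "v \<in> E C" for A B C v
    using dr that unfolding double_rep_def F_def by blast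
  have mono: "gam C' C (del C C' v) = v" if "C' \<in> F" "C \<in> F" "face_le C' C" "v \<in> E C" for C' C v
    using assms(2) that unfolding in_cat_A_def F_def by blast
  have trans: "phi H f gam del A C v = phi H f gam del B C (phi H f gam del A B v)"
    if "A \<in> F" "B \<in> F" "C \<in> F" "faces_collinear A B C" "v \<in> E A" for A B C v
    using assms(2) that unfolding in_cat_A_def F_def by blast
  have inv: "bij_betw (phi H f gam del A B) (E A) (E B)" if "opposing H f A B" for A B
    using assms(2) that unfolding in_cat_A_def by blast
  have inE: "g x \<in> W" if "clin_map V W g" "x \<in> V" for V W g x using that unfolding clin_map_def by blast
  have phi_eq: "phi H f gam del A B w = gam Z B (del A Z w)" if A: "A \<in> F" and B: "B \<in> F" and w: "w \<in> E A" for A B w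
  proof -
    define D where "D = (SOME C. C \<in> faces H f \<and> face_le C A \<and> face_le C B)"
    have "D \<in> F \<and> face_le D A \<and> face_le D B" unfolding D_def F_def
      by (rule someI[of _ Z]) (use ZF Ole A B F_def in blast)
    then have D: "D \<in> F" "face_le D A" "face_le D B" by auto
    have w1: "del A D w \<in> E D" using inE[OF cmd[OF D(1) A D(2)] w] .
    have "phi H f gam del A B w = gam D B (del A D w)" unfolding phi_def D_def Let_def by simp
    also have "\<dots> = gam D B (gam Z D (del D Z (del A D w)))" using mono[OF ZF D(1) Ole[OF D(1)] w1] by simp
    also have "\<dots> = gam Z B (del D Z (del A D w))"
      using compg[OF ZF D(1) B Ole[OF D(1)] D(3)] inE[OF cmd[OF ZF D(1) Ole[OF D(1)]] w1] by simp
    also have "\<dots> = gam Z B (del A Z w)" using compd[OF ZF D(1) A Ole[OF D(1)] D(2) w] by simp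
    finally show ?thesis .
  qed
  define act where "act = (\<lambda>C v. del C Z (gam Z C v))"
  have actV: "act C v \<in> E Z" if "C \<in> F" "v \<in> E Z" for C v
    unfolding act_def using inE[OF cmd[OF ZF that(1) Ole[OF that(1)]]] inE[OF cmg[OF ZF that(1) Ole[OF that(1)]] that(2)] by blast
  have gO: "gam Z C v \<in> E C" if "C \<in> F" "v \<in> E Z" for C v
    using inE[OF cmg[OF ZF that(1) Ole[OF that(1)]] that(2)] .
  have dO: "del C Z v \<in> E Z" if "C \<in> F" "v \<in> E C" for C v
    using inE[OF cmd[OF ZF that(1) Ole[OF that(1)]] that(2)] .
  have P0: "csubspace (E Z)" using sub[OF ZF] .
  have P1: "\<forall>C\<in>F. clin_map (E Z) (E Z) (act C)"
    unfolding act_def using clin_comp cmg cmd ZF Ole by blast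
  have P2: "\<forall>C\<in>F. \<forall>v\<in>E Z. act C (act C v) = act C v"
    unfolding act_def using mono ZF Ole gO by simp
  have P3: "\<forall>A\<in>F. \<forall>B\<in>F. \<forall>C\<in>F. faces_collinear A B C \<longrightarrow>
        (\<forall>v\<in>E Z. act A (act C v) = act A (act B (act C v)))"
  proof (intro ballI impI)
    fix A B C v assume A: "A \<in> F" and B: "B \<in> F" and C: "C \<in> F" and col: "faces_collinear A B C" and v: "v \<in> E Z"
    have col': "faces_collinear C B A" using col unfolding faces_collinear_def by (metis closed_segment_commute)
    have u: "gam Z C v \<in> E C" using gO[OF C v] .
    have "act A (act C v) = del A Z (phi H f gam del C A (gam Z C v))"
      unfolding act_def using phi_eq[OF C A u] by simp
    also have "\<dots> = del A Z (phi H f gam del B A (phi H f gam del C B (gam Z C v)))"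
      using trans[OF C B A col' u] by simp
    also have "\<dots> = act A (act B (act C v))"
      unfolding act_def using phi_eq[OF C B u] phi_eq[OF B A] gO[OF B] dO[OF C u] by simp
    finally show "act A (act C v) = act A (act B (act C v))" .
  qed
  have P4: "\<forall>A\<in>F. \<forall>B\<in>F. face_le A B \<longrightarrow>
        (\<forall>v\<in>E Z. act A (act B v) = act B v \<and> act B (act A v) = act B v)"
  proof (intro ballI impI conjI)
    fix A B v assume A: "A \<in> F" and B: "B \<in> F" and AB: "face_le A B" and v: "v \<in> E Z"
    have u: "gam Z B v \<in> E B" using gO[OF B v] .
    have u2: "del B A (gam Z B v) \<in> E A" using inE[OF cmd[OF A B AB] u] .
    have "act A (act B v) = del A Z (gam Z A (del A Z (del B A (gam Z B v))))"
      unfolding act_def using compd[OF ZF A B Ole[OF A] AB u] by simp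
    also have "\<dots> = del A Z (del B A (gam Z B v))" using mono[OF ZF A Ole[OF A] u2] by simp
    also have "\<dots> = act B v" unfolding act_def using compd[OF ZF A B Ole[OF A] AB u] by simp
    finally show "act A (act B v) = act B v" .
    have w: "gam Z A v \<in> E A" using gO[OF A v] .
    have "act B (act A v) = del B Z (gam A B (gam Z A (del A Z (gam Z A v))))"
      unfolding act_def using compg[OF ZF A B Ole[OF A] AB dO[OF A w]] by simp
    also have "\<dots> = del B Z (gam A B (gam Z A v))" using mono[OF ZF A Ole[OF A] w] by simp
    also have "\<dots> = act B v" unfolding act_def using compg[OF ZF A B Ole[OF A] AB v] by simp
    finally show "act B (act A v) = act B v" .
  qed
  have P5: "\<forall>A B. opposing H f A B \<longrightarrow>
        bij_betw (\<lambda>v. act A (act B (act A v)) + (v - act A v)) (E Z) (E Z)"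
  proof (intro allI impI)
    fix A B assume op: "opposing H f A B"
    have A: "A \<in> F" and B: "B \<in> F" using op unfolding opposing_def F_def by auto
    have T: "bij_betw (\<lambda>w. phi H f gam del B A (phi H f gam del A B w)) (E A) (E A)"
      using bij_betw_trans[OF inv[OF op] inv[OF opposing_sym[OF op]]] by (simp add: comp_def)
    show "bij_betw (\<lambda>v. act A (act B (act A v)) + (v - act A v)) (E Z) (E Z)"
    proof (rule abstract_bij[OF P0 sub[OF A] cmg[OF ZF A Ole[OF A]] cmd[OF ZF A Ole[OF A]] _ T])
      show "\<forall>w\<in>E A. gam Z A (del A Z w) = w" using mono[OF ZF A Ole[OF A]] by blast
      show "\<forall>v\<in>E Z. act A (act B (act A v)) + (v - act A v) =
          del A Z (phi H f gam del B A (phi H f gam del A B (gam Z A v))) + (v - del A Z (gam Z A v))"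
      proof
        fix v assume v: "v \<in> E Z"
        have w: "gam Z A v \<in> E A" using gO[OF A v] .
        show "act A (act B (act A v)) + (v - act A v) =
          del A Z (phi H f gam del B A (phi H f gam del A B (gam Z A v))) + (v - del A Z (gam Z A v))"
          unfolding act_def using phi_eq[OF A B w] phi_eq[OF B A] gO[OF B] dO[OF A w] by simp
      qed
    qed
  qed
  show ?thesis unfolding R_module_action_def
    using P0 P1 P2 P3 P4 P5 unfolding act_def Z_def F_def by blast
qed

end
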